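(* Let $H=(U,F)$ be a $d$-regular graph on $n$ vertices and let $k$ be an integer with $1 \le k \le d$. Let $G'$ be obtained from $H$ by subdividing every edge of $H$ once (replacing each edge $\{u,w\}$ by a new vertex $x_{uw}$ and edges $\{u,x_{uw}\},\{x_{uw},w\}$). Choose $\theta_i,\phi$ so that every original vertex $u\in U$ is accepting and every subdivision vertex is rejecting, and set $q=1$ and $p = d - (k-1)/2 + \varepsilon$ with $0<\varepsilon<1/n^2$. Then $H$ contains a clique on $k$ vertices if and only if there is a seed set $S$ in $G'$ with $|S| \le k$ and $\pi(S) > 0$.
   Context: Basic model on a finite undirected graph $G$: each agent $i$ has $\theta_i\in[0,1]$, the product has $\phi\in[0,1]$; agent $i$ is accepting if $\theta_i \le \phi$ and rejecting otherwise. A seed set is a set $S$ of accepting agents. $V(S)$ is the set of agents $i$ for which there exist $j \in S$ and a path in $G$ from $i$ to $j$ all of whose internal vertices are accepting (paths of length $0$ allowed). $V^+(S)$ and $V^-(S)$ are the accepting and rejecting agents in $V(S)$, and $\pi(S) = p\,|V^+(S)| - q\,|V^-(S)|$. *)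

theory Defs
  imports Complex_Main
begin

definition accepting :: "('v \<Rightarrow> real) \<Rightarrow> real \<Rightarrow> 'v \<Rightarrow> bool" where
  "accepting theta phi i \<longleftrightarrow> theta i \<le> phi"

definition seed_set :: "'v set \<Rightarrow> ('v \<Rightarrow> real) \<Rightarrow> real \<Rightarrow> 'v set \<Rightarrow> bool" where
  "seed_set Vs theta phi S \<longleftrightarrow> S \<subseteq> Vs \<and> (\<forall>j\<in>S. accepting theta phi j)"

definition is_path :: "'v set \<Rightarrow> ('v \<Rightarrow> 'v \<Rightarrow> bool) \<Rightarrow> 'v list \<Rightarrow> bool" where
  "is_path Vs Adj xs \<longleftrightarrow> xs \<noteq> [] \<and> distinct xs \<and> set xs \<subseteq> Vs \<and>
     (\<forall>k. Suc k < length xs \<longrightarrow> Adj (xs ! k) (xs ! Suc k))"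

text \<open>V(S): agents connected to some seed by a path whose internal vertices are accepting
  (paths of length 0 allowed).\<close>
definition reached :: "'v set \<Rightarrow> ('v \<Rightarrow> 'v \<Rightarrow> bool) \<Rightarrow> ('v \<Rightarrow> real) \<Rightarrow> real \<Rightarrow> 'v set \<Rightarrow> 'v set" where
  "reached Vs Adj theta phi S = {i \<in> Vs. \<exists>j\<in>S. \<exists>xs. is_path Vs Adj xs \<and> hd xs = i \<and> last xs = j \<and>
       (\<forall>v\<in>set (butlast (tl xs)). accepting theta phi v)}"

definition reached_pos where
  "reached_pos Vs Adj theta phi S = {i \<in> reached Vs Adj theta phi S. accepting theta phi i}"

definition reached_neg where
  "reached_neg Vs Adj theta phi S = {i \<in> reached Vs Adj theta phi S. \<not> accepting theta phi i}"

definition profit :: "'v set \<Rightarrow> ('v \<Rightarrow> 'v \<Rightarrow> bool) \<Rightarrow> ('v \<Rightarrow> real) \<Rightarrow> real \<Rightarrow> real \<Rightarrow> real \<Rightarrow> 'v set \<Rightarrow> real" where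
  "profit Vs Adj theta phi p q S =
     p * real (card (reached_pos Vs Adj theta phi S)) - q * real (card (reached_neg Vs Adj theta phi S))"

definition simple_graph :: "'a set \<Rightarrow> ('a \<Rightarrow> 'a \<Rightarrow> bool) \<Rightarrow> bool" where
  "simple_graph U E \<longleftrightarrow> finite U \<and> (\<forall>u w. E u w \<longrightarrow> u \<in> U \<and> w \<in> U \<and> E w u \<and> u \<noteq> w)"

definition regular :: "'a set \<Rightarrow> ('a \<Rightarrow> 'a \<Rightarrow> bool) \<Rightarrow> nat \<Rightarrow> bool" where
  "regular U E d \<longleftrightarrow> (\<forall>u\<in>U. card {w\<in>U. E u w} = d)"

definition has_clique :: "'a set \<Rightarrow> ('a \<Rightarrow> 'a \<Rightarrow> bool) \<Rightarrow> nat \<Rightarrow> bool" where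
  "has_clique U E k \<longleftrightarrow> (\<exists>C\<subseteq>U. card C = k \<and> (\<forall>u\<in>C. \<forall>w\<in>C. u \<noteq> w \<longrightarrow> E u w))"

text \<open>Subdivision G': original vertex u is Inl u; the subdivision vertex of edge {u,w}
  is Inr {u,w}.\<close>
definition subdiv_edges :: "('a \<Rightarrow> 'a \<Rightarrow> bool) \<Rightarrow> 'a set set" where
  "subdiv_edges E = {{u, w} | u w. E u w}"

definition subdiv_verts :: "'a set \<Rightarrow> ('a \<Rightarrow> 'a \<Rightarrow> bool) \<Rightarrow> ('a + 'a set) set" where
  "subdiv_verts U E = Inl ` U \<union> Inr ` subdiv_edges E"

fun subdiv_adj :: "('a \<Rightarrow> 'a \<Rightarrow> bool) \<Rightarrow> ('a + 'a set) \<Rightarrow> ('a + 'a set) \<Rightarrow> bool" where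
  "subdiv_adj E (Inl u) (Inr e) = (e \<in> subdiv_edges E \<and> u \<in> e)"
| "subdiv_adj E (Inr e) (Inl u) = (e \<in> subdiv_edges E \<and> u \<in> e)"
| "subdiv_adj E _ _ = False"

end

theory Submission imports Defs begin
lemma finite_SE:
  assumes H: "simple_graph U E" shows "finite (subdiv_edges E)"
proof -
  have "subdiv_edges E \<subseteq> Pow U" using H unfolding subdiv_edges_def simple_graph_def by auto
  moreover have "finite U" using H unfolding simple_graph_def by auto
  ultimately show ?thesis by (meson finite_Pow_iff finite_subset)
qed

lemma path_short:
  assumes rej: "\<forall>e\<in>subdiv_edges E. \<not> accepting theta phi (Inr e)"
    and P: "is_path (subdiv_verts U E) (subdiv_adj E) xs"
    and L: "last xs = Inl j"
    and I: "\<forall>v\<in>set (butlast (tl xs)). accepting theta phi v"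
  shows "xs = [Inl j] \<or> (\<exists>e. xs = [Inr e, Inl j] \<and> e \<in> subdiv_edges E \<and> j \<in> e)"
proof -
  define n where "n = length xs"
  have ne: "xs \<noteq> []" and adj: "\<And>k. Suc k < n \<Longrightarrow> subdiv_adj E (xs ! k) (xs ! Suc k)"
    using P unfolding is_path_def n_def by auto
  have n1: "n \<ge> 1" using ne n_def by (cases xs) auto
  have lastn: "xs ! (n - 1) = Inl j" using L ne n_def by (simp add: last_conv_nth)
  show ?thesis
  proof (cases "n \<ge> 3")
    case True
    have s: "Suc (n-2) = n-1" using True by simp
    have "subdiv_adj E (xs ! (n-2)) (xs ! (n-1))" using adj[of "n-2"] True s by simp
    then have "subdiv_adj E (xs ! (n-2)) (Inl j)" using lastn by simp
    then obtain e where v: "xs!(n-2) = Inr e" "e \<in> subdiv_edges E"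
      by (cases "xs!(n-2)") auto
    have len: "length (butlast (tl xs)) = n - 2" using n_def by simp
    have s3: "Suc (n-3) = n-2" using True by simp
    have "butlast (tl xs) ! (n-3) = tl xs ! (n-3)" using True n_def by (simp add: nth_butlast)
    also have "... = xs ! Suc (n-3)" using True n_def by (simp add: nth_tl)
    finally have "butlast (tl xs) ! (n-3) = xs!(n-2)" using s3 by simp
    moreover have "n - 3 < length (butlast (tl xs))" using len True by simp
    ultimately have "xs!(n-2) \<in> set (butlast (tl xs))" by (metis nth_mem)
    then show ?thesis using I v rej by auto
  next
    case False
    then have "n = 1 \<or> n = 2" using n1 by auto
    then show ?thesis
    proof
      assume "n = 1"
      then obtain a where "xs = [a]" using n_def by (cases xs) auto
      then show ?thesis using L by auto
    next
      assume n2: "n = 2"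
      then obtain a b where xs: "xs = [a,b]" using n_def
        by (cases xs; cases "tl xs") auto
      have "subdiv_adj E a (Inl j)" using adj[of 0] n2 xs L by simp
      then show ?thesis using xs L by (cases a) auto
    qed
  qed
qed

lemma reached_char:
  assumes rej: "\<forall>e\<in>subdiv_edges E. \<not> accepting theta phi (Inr e)"
    and T: "T \<subseteq> U"
  shows "reached (subdiv_verts U E) (subdiv_adj E) theta phi (Inl ` T) =
     Inl ` T \<union> Inr ` {e\<in>subdiv_edges E. \<exists>j\<in>T. j\<in>e}"
proof (rule set_eqI, rule iffI)
  fix i assume "i \<in> reached (subdiv_verts U E) (subdiv_adj E) theta phi (Inl ` T)"
  then obtain j xs where j: "j \<in> T" and P: "is_path (subdiv_verts U E) (subdiv_adj E) xs"
    and h: "hd xs = i" "last xs = Inl j" and I: "\<forall>v\<in>set (butlast (tl xs)). accepting theta phi v"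
    unfolding reached_def by blast
  from path_short[OF rej P h(2) I] show "i \<in> Inl ` T \<union> Inr ` {e\<in>subdiv_edges E. \<exists>j\<in>T. j\<in>e}"
    using h j by auto
next
  fix i assume "i \<in> Inl ` T \<union> Inr ` {e\<in>subdiv_edges E. \<exists>j\<in>T. j\<in>e}"
  then show "i \<in> reached (subdiv_verts U E) (subdiv_adj E) theta phi (Inl ` T)"
  proof
    assume "i \<in> Inl ` T"
    then obtain j where j: "j\<in>T" "i = Inl j" by auto
    then have path: "is_path (subdiv_verts U E) (subdiv_adj E) [Inl j]"
      using T by (auto simp: is_path_def subdiv_verts_def)
    show ?thesis unfolding reached_def using path j T
      by (auto simp: subdiv_verts_def intro!: bexI[of _ "Inl j"] exI[of _ "[Inl j]"])
  next
    assume "i \<in> Inr ` {e\<in>subdiv_edges E. \<exists>j\<in>T. j\<in>e}"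
    then obtain e j where e: "e \<in> subdiv_edges E" "j\<in>T" "j\<in>e" "i = Inr e" by auto
    then have path: "is_path (subdiv_verts U E) (subdiv_adj E) [Inr e, Inl j]"
      using T by (auto simp: is_path_def subdiv_verts_def less_Suc_eq)
    show ?thesis unfolding reached_def using path e T
      by (auto simp: subdiv_verts_def intro!: bexI[of _ "Inl j"] exI[of _ "[Inr e, Inl j]"])
  qed
qed

lemma count:
  assumes H: "simple_graph U E" and reg: "regular U E d" and T: "T \<subseteq> U"
  shows "2 * card {e\<in>subdiv_edges E. \<exists>j\<in>T. j\<in>e} + card {(u,w). u\<in>T \<and> w\<in>T \<and> E u w} = 2 * d * card T"
proof -
  have fin: "finite U" and sym: "\<And>u w. E u w \<Longrightarrow> E w u" and irr: "\<And>u w. E u w \<Longrightarrow> u \<noteq> w"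
    and inU: "\<And>u w. E u w \<Longrightarrow> u \<in> U \<and> w \<in> U" using H unfolding simple_graph_def by auto
  have finT: "finite T" using T fin finite_subset by auto
  define I where "I = {e\<in>subdiv_edges E. \<exists>j\<in>T. j\<in>e}"
  define B where "B = {e\<in>I. e \<subseteq> T}"
  define P where "P = {(u,w). u\<in>T \<and> E u w}"
  define P2 where "P2 = {(u,w). u\<in>T \<and> w\<in>T \<and> E u w}"
  define fib where "fib e = {(u,w). u\<in>T \<and> E u w \<and> e = {u,w}}" for e
  have finSE: "finite (subdiv_edges E)" by (rule finite_SE[OF H])
  have finI: "finite I" using finSE I_def by auto
  have finB: "finite B" using finI B_def by auto
  have BI: "B \<subseteq> I" by (auto simp: B_def)
  have P_eq: "P = Sigma T (\<lambda>u. {w\<in>U. E u w})" using inU by (auto simp: P_def)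
  have cardP: "card P = d * card T"
  proof -
    have "card P = (\<Sum>u\<in>T. card {w\<in>U. E u w})" unfolding P_eq using finT fin by (subst card_SigmaI) auto
    also have "... = (\<Sum>u\<in>T. d)" using reg T unfolding regular_def by (intro sum.cong) auto
    finally show ?thesis by simp
  qed
  have disj: "\<forall>e\<in>I. \<forall>e'\<in>I. e \<noteq> e' \<longrightarrow> fib e \<inter> fib e' = {}" by (auto simp: fib_def)
  have finfib: "finite (fib e)" for e
  proof -
    have "fib e \<subseteq> T \<times> U" using inU by (auto simp: fib_def)
    then show ?thesis by (rule finite_subset) (use finT fin in auto)
  qed
  have P_U: "P = (\<Union>e\<in>I. fib e)"
    by (auto simp: P_def I_def fib_def subdiv_edges_def)
  have P2_U: "P2 = (\<Union>e\<in>B. fib e)"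
    by (auto simp: P2_def B_def I_def fib_def subdiv_edges_def)
  have fib2: "card (fib e) = 2" if "e \<in> B" for e
  proof -
    have eS: "e \<in> subdiv_edges E" "e \<subseteq> T" using that by (auto simp: B_def I_def)
    then obtain a b where e: "e = {a,b}" "E a b" by (auto simp: subdiv_edges_def)
    have ab: "a\<in>T" "b\<in>T" using eS e by auto
    have "fib e = {(a,b),(b,a)}" using e ab sym by (auto simp: fib_def doubleton_eq_iff)
    then show "card (fib e) = 2" using irr[OF e(2)] by auto
  qed
  have fib1: "card (fib e) = 1" if "e \<in> I - B" for e
  proof -
    have eS: "e \<in> subdiv_edges E" "\<exists>j\<in>T. j\<in>e" "\<not> e \<subseteq> T" using that by (auto simp: B_def I_def)
    then obtain a b where e: "e = {a,b}" "E a b" by (auto simp: subdiv_edges_def)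
    have ab: "a\<in>T \<or> b\<in>T" "\<not> (a\<in>T \<and> b\<in>T)" using eS e by auto
    show ?thesis
    proof (cases "a \<in> T")
      case True
      then have "fib e = {(a,b)}" using e ab sym by (auto simp: fib_def doubleton_eq_iff)
      then show ?thesis by simp
    next
      case False
      then have "fib e = {(b,a)}" using e ab sym by (auto simp: fib_def doubleton_eq_iff)
      then show ?thesis by simp
    qed
  qed
  have "card P = (\<Sum>e\<in>I. card (fib e))" unfolding P_U
    by (rule card_UN_disjoint[OF finI]) (use finfib disj in auto)
  also have "... = (\<Sum>e\<in>B. card (fib e)) + (\<Sum>e\<in>I-B. card (fib e))"
    using sum.subset_diff[OF BI finI] by (simp add: add.commute)
  also have "(\<Sum>e\<in>B. card (fib e)) = (\<Sum>e\<in>B. 2)" using fib2 by (intro sum.cong) auto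
  also have "(\<Sum>e\<in>I-B. card (fib e)) = (\<Sum>e\<in>I-B. 1)" using fib1 by (intro sum.cong) auto
  finally have 1: "card P = 2*card B + card (I-B)" by simp
  have "card P2 = (\<Sum>e\<in>B. card (fib e))" unfolding P2_U
    by (rule card_UN_disjoint[OF finB]) (use finfib disj BI in auto)
  also have "... = (\<Sum>e\<in>B. 2)" using fib2 by (intro sum.cong) auto
  finally have 2: "card P2 = 2 * card B" by simp
  have 3: "card I = card B + card (I-B)" using card_Diff_subset[OF finB BI] card_mono[OF finI BI] by simp
  show ?thesis using 1 2 3 cardP unfolding I_def[symmetric] P2_def[symmetric] by simp
qed

theorem mainTheorem9:
  fixes U :: "'a set" and E :: "'a \<Rightarrow> 'a \<Rightarrow> bool" and d k :: nat
    and theta :: "('a + 'a set) \<Rightarrow> real" and phi p q \<epsilon> :: real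
  assumes H: "simple_graph U E"
    and reg: "regular U E d"
    and k: "1 \<le> k" "k \<le> d"
    and theta01: "\<forall>i\<in>subdiv_verts U E. 0 \<le> theta i \<and> theta i \<le> 1"
    and phi01: "0 \<le> phi" "phi \<le> 1"
    and acc: "\<forall>u\<in>U. accepting theta phi (Inl u)"
    and rej: "\<forall>e\<in>subdiv_edges E. \<not> accepting theta phi (Inr e)"
    and q: "q = 1"
    and p: "p = real d - (real k - 1) / 2 + \<epsilon>"
    and eps: "0 < \<epsilon>" "\<epsilon> < 1 / (real (card U))^2"
  shows "has_clique U E k \<longleftrightarrow>
    (\<exists>S. seed_set (subdiv_verts U E) theta phi S \<and> card S \<le> k \<and>
         profit (subdiv_verts U E) (subdiv_adj E) theta phi p q S > 0)"
proof -
  have fin: "finite U" and irr: "\<And>u w. E u w \<Longrightarrow> u \<noteq> w"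
    and inU: "\<And>u w. E u w \<Longrightarrow> u \<in> U \<and> w \<in> U" using H unfolding simple_graph_def by auto
  define n where "n = card U"
  have n0: "n \<noteq> 0"
  proof
    assume "n = 0" then show False using eps n_def by simp
  qed
  then obtain u0 where u0: "u0 \<in> U" using n_def by fastforce
  have "d = card {w\<in>U. E u0 w}" using reg u0 unfolding regular_def by auto
  also have "... \<le> card (U - {u0})" using irr fin by (intro card_mono) auto
  also have "... = n - 1" using u0 fin n_def by simp
  finally have dn: "d \<le> n - 1" .
  have kn: "k + 1 \<le> n" using dn k n0 by linarith
  have npos: "real n > 0" using n0 by simp
  have en: "\<epsilon> * (real n)^2 < 1" using eps n_def npos by (simp add: field_simps)
  have "2 * real k \<le> real n * real n"
  proof -
    have n2: "2 \<le> n" using kn k by linarith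
    have "2 * k \<le> 2 * n" using kn by linarith
    also have "... \<le> n * n" using n2 by (rule mult_le_mono1)
    finally have "2 * k \<le> n * n" .
    then show ?thesis by (metis of_nat_le_iff of_nat_mult of_nat_numeral)
  qed
  then have "2 * real k * \<epsilon> \<le> real n * real n * \<epsilon>" using eps by (intro mult_right_mono) auto
  then have ke: "2 * real k * \<epsilon> < 1" using en by (simp add: power2_eq_square mult_ac)
  have "2 * \<epsilon> * 1 \<le> 2 * \<epsilon> * real k" using k eps by (intro mult_left_mono) auto
  then have e12: "2 * \<epsilon> < 1" using ke by (simp add: mult_ac)
  define P2 where "P2 T = {(u,w). u\<in>T \<and> w\<in>T \<and> E u w}" for T
  have prof: "2 * profit (subdiv_verts U E) (subdiv_adj E) theta phi p q (Inl ` T)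
      = 2 * (p - real d) * real (card T) + real (card (P2 T))" if T: "T \<subseteq> U" for T
  proof -
    define I where "I = {e\<in>subdiv_edges E. \<exists>j\<in>T. j\<in>e}"
    have R: "reached (subdiv_verts U E) (subdiv_adj E) theta phi (Inl ` T) = Inl ` T \<union> Inr ` I"
      using reached_char[OF rej T] I_def by simp
    have Rp: "reached_pos (subdiv_verts U E) (subdiv_adj E) theta phi (Inl ` T) = Inl ` T"
      unfolding reached_pos_def R using acc T rej I_def by auto
    have Rn: "reached_neg (subdiv_verts U E) (subdiv_adj E) theta phi (Inl ` T) = Inr ` I"
      unfolding reached_neg_def R using acc T rej I_def by auto
    have c: "2 * card I + card (P2 T) = 2 * d * card T"
      using count[OF H reg T] I_def P2_def by simp
    then have c': "2 * real (card I) + real (card (P2 T)) = 2 * real d * real (card T)"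
      by (metis of_nat_add of_nat_mult of_nat_numeral)
    show ?thesis unfolding profit_def Rp Rn q using c'
      by (simp add: card_image inj_on_def algebra_simps)
  qed
  have P2sub: "P2 T \<subseteq> Sigma T (\<lambda>u. T - {u})" for T using irr by (auto simp: P2_def)
  have cardSig: "finite T \<Longrightarrow> card (Sigma T (\<lambda>u. T - {u})) = card T * (card T - 1)" for T :: "'a set"
    by (simp add: card_SigmaI)
  show ?thesis
  proof
    assume "has_clique U E k"
    then obtain C where C: "C \<subseteq> U" "card C = k" "\<forall>u\<in>C. \<forall>w\<in>C. u \<noteq> w \<longrightarrow> E u w"
      unfolding has_clique_def by blast
    have finC: "finite C" using C fin finite_subset by auto
    have "P2 C = Sigma C (\<lambda>u. C - {u})" using C(3) P2sub[of C] by (auto simp: P2_def)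
    then have cP: "card (P2 C) = k * (k - 1)" using cardSig[OF finC] C by simp
    have cP': "real (card (P2 C)) = real k * (real k - 1)" using cP k by (simp add: of_nat_diff)
    have h: "2 * (p - real d) = 2 * \<epsilon> - (real k - 1)" using p by (simp add: field_simps)
    have "2 * profit (subdiv_verts U E) (subdiv_adj E) theta phi p q (Inl ` C) = 2 * (p - real d) * real k + real k * (real k - 1)"
      using prof[OF C(1)] C(2) cP' by simp
    also have "... = (2 * \<epsilon> - (real k - 1)) * real k + real k * (real k - 1)" using h by simp
    also have "... = 2 * \<epsilon> * real k" by (simp add: algebra_simps)
    finally have "2 * profit (subdiv_verts U E) (subdiv_adj E) theta phi p q (Inl ` C) = 2 * \<epsilon> * real k" .
    then have "profit (subdiv_verts U E) (subdiv_adj E) theta phi p q (Inl ` C) > 0"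
    proof -
      have "2 * \<epsilon> * real k > 0" using eps k by simp
      then show ?thesis using \<open>2 * profit (subdiv_verts U E) (subdiv_adj E) theta phi p q (Inl ` C) = 2 * \<epsilon> * real k\<close> by linarith
    qed
    moreover have "seed_set (subdiv_verts U E) theta phi (Inl ` C)"
      using C acc by (auto simp: seed_set_def subdiv_verts_def)
    moreover have "card (Inl ` C) \<le> k" using C by (simp add: card_image)
    ultimately show "\<exists>S. seed_set (subdiv_verts U E) theta phi S \<and> card S \<le> k \<and>
         profit (subdiv_verts U E) (subdiv_adj E) theta phi p q S > 0" by blast
  next
    assume "\<exists>S. seed_set (subdiv_verts U E) theta phi S \<and> card S \<le> k \<and>
         profit (subdiv_verts U E) (subdiv_adj E) theta phi p q S > 0"
    then obtain S where S: "seed_set (subdiv_verts U E) theta phi S" "card S \<le> k"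
      "profit (subdiv_verts U E) (subdiv_adj E) theta phi p q S > 0" by blast
    define T where "T = Inl -` S"
    have SI: "S = Inl ` T"
    proof -
      have "\<And>x. x \<in> S \<Longrightarrow> \<exists>u. x = Inl u"
      proof -
        fix x assume x: "x \<in> S"
        show "\<exists>u. x = Inl u"
        proof (cases x)
          case (Inr e)
          then have "e \<in> subdiv_edges E" using x S(1) by (auto simp: seed_set_def subdiv_verts_def)
          then show ?thesis using rej S(1) x Inr by (auto simp: seed_set_def)
        qed auto
      qed
      then show ?thesis unfolding T_def by force
    qed
    have TU: "T \<subseteq> U" using S(1) SI by (auto simp: seed_set_def subdiv_verts_def)
    have finT: "finite T" using TU fin finite_subset by auto
    define t where "t = card T"
    have tk: "t \<le> k" using S(2) SI t_def by (simp add: card_image)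
    have pr: "2 * (p - real d) * real t + real (card (P2 T)) > 0"
      using prof[OF TU] S(3) SI t_def by simp
    then have pr2: "2 * \<epsilon> * real t + real (card (P2 T)) > real t * (real k - 1)"
      using p by (simp add: algebra_simps)
    have cle: "card (P2 T) \<le> t * (t - 1)" using card_mono[OF _ P2sub[of T]] cardSig[OF finT] finT t_def by simp
    have t0: "t \<noteq> 0"
    proof
      assume "t = 0" then have "card (P2 T) = 0" using cle by simp
      then show False using pr2 \<open>t = 0\<close> by simp
    qed
    have teq: "t = k"
    proof (rule ccontr)
      assume "t \<noteq> k" then have tk1: "t + 1 \<le> k" using tk by simp
      have "real (card (P2 T)) \<le> real t * (real t - 1)" proof -
        have "real (card (P2 T)) \<le> real (t * (t - 1))" using cle by (simp only: of_nat_le_iff)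
        then show ?thesis using t0 by (simp add: of_nat_diff)
      qed
      also have "... \<le> real t * (real k - 2)" using tk1 by (intro mult_left_mono) auto
      finally have "2 * \<epsilon> * real t + real (card (P2 T)) \<le> real t * (2 * \<epsilon> + real k - 2)"
        by (simp add: algebra_simps)
      also have "... \<le> real t * (real k - 1)" using e12 by (intro mult_left_mono) auto
      finally show False using pr2 by simp
    qed
    have "real (card (P2 T)) > real k * (real k - 1) - 1"
      using pr2 teq ke by (simp add: algebra_simps)
    then have "real (card (P2 T)) > real (k * (k - 1)) - 1" using k by (simp add: of_nat_diff)
    then have "card (P2 T) \<ge> k * (k - 1)" by linarith
    then have "card (P2 T) = card (Sigma T (\<lambda>u. T - {u}))" using cardSig[OF finT] teq t_def cle by simp
    then have eqP: "P2 T = Sigma T (\<lambda>u. T - {u})"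
      using P2sub[of T] finT by (intro card_subset_eq) (auto intro: finite_SigmaI)
    have "\<forall>u\<in>T. \<forall>w\<in>T. u \<noteq> w \<longrightarrow> E u w"
    proof (intro ballI impI)
      fix u w assume "u \<in> T" "w \<in> T" "u \<noteq> w"
      then have "(u,w) \<in> P2 T" using eqP by auto
      then show "E u w" by (auto simp: P2_def)
    qed
    then show "has_clique U E k" unfolding has_clique_def using TU teq t_def by blast
  qed
qed

end
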